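(* Let $(\mathfrak g,[\cdot,\cdot],[\![\cdot,\cdot,\cdot]\!])$ be a Lie-Yamaguti algebra and let $T:\mathfrak g^*\to\mathfrak g$ be an invertible linear map that is skew-symmetric, i.e. $\langle\alpha,T(\beta)\rangle+\langle\beta,T(\alpha)\rangle=0$ for all $\alpha,\beta\in\mathfrak g^*$. Define $\omega\in\wedge^2\mathfrak g^*$ by $\omega(x,y)=\langle T^{-1}(x),y\rangle$. Then $\omega$ is a symplectic structure on $\mathfrak g$ if and only if $T$ is a (skew-symmetric) relative Rota-Baxter operator on $\mathfrak g$ with respect to the coadjoint representation $(\mathfrak g^*;\mathrm{ad}^*,-\mathfrak R^*\tau)$.
   Context: All vector spaces are over a field of characteristic $0$. A Lie-Yamaguti algebra is a vector space $\mathfrak g$ with a bilinear skew-symmetric $[\cdot,\cdot]$ and a trilinear $[\![\cdot,\cdot,\cdot]\!]$ skew-symmetric in its first two arguments such that for all $x,y,z,w,t$: (1) $[[x,y],z]+[[y,z],x]+[[z,x],y]+[\![x,y,z]\!]+[\![y,z,x]\!]+[\![z,x,y]\!]=0$; (2) $[\![[x,y],z,w]\!]+[\![[y,z],x,w]\!]+[\![[z,x],y,w]\!]=0$; (3) $[\![x,y,[z,w]]\!]=[[\![x,y,z]\!],w]+[z,[\![x,y,w]\!]]$; (4) $[\![x,y,[\![z,w,t]\!]]\!]=[\![[\![x,y,z]\!],w,t]\!]+[\![z,[\![x,y,w]\!],t]\!]+[\![z,w,[\![x,y,t]\!]]\!]$. A symplectic structure on $\mathfrak g$ is a nondegenerate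 skew-symmetric bilinear form $\omega$ such that for all $x,y,z,w$: $\omega(x,[y,z])+\omega(y,[z,x])+\omega(z,[x,y])=0$ and $\omega(z,[\![x,y,w]\!])-\omega(x,[\![w,z,y]\!])+\omega(y,[\![w,z,x]\!])-\omega(w,[\![x,y,z]\!])=0$. For a representation $(V;\rho,\mu)$ (linear $\rho:\mathfrak g\to\mathfrak{gl}(V)$, bilinear $\mu:\otimes^2\mathfrak g\to\mathfrak{gl}(V)$) put $D_{\rho,\mu}(x,y)=\mu(y,x)-\mu(x,y)+[\rho(x),\rho(y)]-\rho([x,y])$; a relative Rota-Baxter operator with respect to $(V;\rho,\mu)$ is a linear $T:V\to\mathfrak g$ with $[Tu,Tv]=T(\rho(Tu)v-\rho(Tv)u)$ and $[\![Tu,Tv,Tw]\!]=T(D_{\rho,\mu}(Tu,Tv)w+\mu(Tv,Tw)u-\mu(Tu,Tw)v)$. The coadjoint representation is $V=\mathfrak g^*$, $\rho(x)=\mathrm{ad}^*_x$ with $\langle\mathrm{ad}^*_x\alpha,z\rangle=-\langle\alpha,[x,z]\rangle$, and $\mu(x,y)=-(\mathfrak R(y,x))^*$, where $\mathfrak R(x,y)z=[\![z,x,y]\!]$ and $\langle(\mathfrak R(x,y))^*\alpha,z\rangle=-\langle\alpha,\mathfrak R(x,y)z\rangle$. *)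

theory Defs
  imports Main "HOL.Vector_Spaces" "HOL-Library.Function_Algebras"
begin

definition bilin :: "('k::field \<Rightarrow> 'v::ab_group_add \<Rightarrow> 'v) \<Rightarrow> ('k \<Rightarrow> 'w::ab_group_add \<Rightarrow> 'w)
   \<Rightarrow> ('v \<Rightarrow> 'v \<Rightarrow> 'w) \<Rightarrow> bool" where
  "bilin s sw b \<longleftrightarrow> (\<forall>x. Vector_Spaces.linear s sw (b x)) \<and> (\<forall>y. Vector_Spaces.linear s sw (\<lambda>x. b x y))"

definition trilin :: "('k::field \<Rightarrow> 'v::ab_group_add \<Rightarrow> 'v) \<Rightarrow> ('v \<Rightarrow> 'v \<Rightarrow> 'v \<Rightarrow> 'v) \<Rightarrow> bool" where
  "trilin s t \<longleftrightarrow> (\<forall>x y. Vector_Spaces.linear s s (t x y)) \<and> (\<forall>x z. Vector_Spaces.linear s s (\<lambda>y. t x y z))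
      \<and> (\<forall>y z. Vector_Spaces.linear s s (\<lambda>x. t x y z))"

definition LieYamaguti ::
  "('k::field_char_0 \<Rightarrow> 'v::ab_group_add \<Rightarrow> 'v) \<Rightarrow> ('v \<Rightarrow> 'v \<Rightarrow> 'v) \<Rightarrow> ('v \<Rightarrow> 'v \<Rightarrow> 'v \<Rightarrow> 'v) \<Rightarrow> bool" where
  "LieYamaguti s br tr \<longleftrightarrow> vector_space s \<and> bilin s s br \<and> trilin s tr
   \<and> (\<forall>x y. br x y = - br y x)
   \<and> (\<forall>x y z. tr x y z = - tr y x z)
   \<and> (\<forall>x y z. br (br x y) z + br (br y z) x + br (br z x) y + tr x y z + tr y z x + tr z x y = 0)
   \<and> (\<forall>x y z w. tr (br x y) z w + tr (br y z) x w + tr (br z x) y w = 0)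
   \<and> (\<forall>x y z w. tr x y (br z w) = br (tr x y z) w + br z (tr x y w))
   \<and> (\<forall>x y z w t. tr x y (tr z w t) = tr (tr x y z) w t + tr z (tr x y w) t + tr z w (tr x y t))"

definition symplectic ::
  "('k::field_char_0 \<Rightarrow> 'v::ab_group_add \<Rightarrow> 'v) \<Rightarrow> ('v \<Rightarrow> 'v \<Rightarrow> 'v) \<Rightarrow> ('v \<Rightarrow> 'v \<Rightarrow> 'v \<Rightarrow> 'v)
    \<Rightarrow> ('v \<Rightarrow> 'v \<Rightarrow> 'k) \<Rightarrow> bool" where
  "symplectic s br tr \<omega> \<longleftrightarrow> bilin s (*) \<omega>
   \<and> (\<forall>x y. \<omega> x y = - \<omega> y x)
   \<and> (\<forall>x. (\<forall>y. \<omega> x y = 0) \<longrightarrow> x = 0)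
   \<and> (\<forall>x y z. \<omega> x (br y z) + \<omega> y (br z x) + \<omega> z (br x y) = 0)
   \<and> (\<forall>x y z w. \<omega> z (tr x y w) - \<omega> x (tr w z y) + \<omega> y (tr w z x) - \<omega> w (tr x y z) = 0)"

definition dual :: "('k::field \<Rightarrow> 'v::ab_group_add \<Rightarrow> 'v) \<Rightarrow> ('v \<Rightarrow> 'k) set" where
  "dual s = {f. Vector_Spaces.linear s (*) f}"

definition dscale :: "'k::field \<Rightarrow> ('v \<Rightarrow> 'k) \<Rightarrow> ('v \<Rightarrow> 'k)" where
  "dscale c \<alpha> = (\<lambda>x. c * \<alpha> x)"

definition Drm :: "('v \<Rightarrow> 'v \<Rightarrow> 'v) \<Rightarrow> ('v \<Rightarrow> 'w \<Rightarrow> 'w::ab_group_add) \<Rightarrow> ('v \<Rightarrow> 'v \<Rightarrow> 'w \<Rightarrow> 'w)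
   \<Rightarrow> 'v \<Rightarrow> 'v \<Rightarrow> 'w \<Rightarrow> 'w" where
  "Drm br \<rho> \<mu> x y = (\<lambda>u. \<mu> y x u - \<mu> x y u + (\<rho> x (\<rho> y u) - \<rho> y (\<rho> x u)) - \<rho> (br x y) u)"

(* relative Rota-Baxter operator T : V -> g w.r.t. a representation (V; rho, mu);
   V is given as a carrier set with scalar multiplication sV *)
definition relRB ::
  "('k::field \<Rightarrow> 'v::ab_group_add \<Rightarrow> 'v) \<Rightarrow> ('v \<Rightarrow> 'v \<Rightarrow> 'v) \<Rightarrow> ('v \<Rightarrow> 'v \<Rightarrow> 'v \<Rightarrow> 'v)
   \<Rightarrow> 'w::ab_group_add set \<Rightarrow> ('k \<Rightarrow> 'w \<Rightarrow> 'w) \<Rightarrow> ('v \<Rightarrow> 'w \<Rightarrow> 'w) \<Rightarrow> ('v \<Rightarrow> 'v \<Rightarrow> 'w \<Rightarrow> 'w)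
   \<Rightarrow> ('w \<Rightarrow> 'v) \<Rightarrow> bool" where
  "relRB s br tr V sV \<rho> \<mu> T \<longleftrightarrow>
     (\<forall>c. \<forall>u\<in>V. \<forall>v\<in>V. T (sV c u + v) = s c (T u) + T v)
   \<and> (\<forall>u\<in>V. \<forall>v\<in>V. br (T u) (T v) = T (\<rho> (T u) v - \<rho> (T v) u))
   \<and> (\<forall>u\<in>V. \<forall>v\<in>V. \<forall>w\<in>V. tr (T u) (T v) (T w)
          = T (Drm br \<rho> \<mu> (T u) (T v) w + \<mu> (T v) (T w) u - \<mu> (T u) (T w) v))"

(* coadjoint representation: <ad^*_x a, z> = - <a, [x,z]>,
   mu(x,y) = -(R(y,x))^*, so <mu(x,y) a, z> = <a, R(y,x) z> = <a, [[z,y,x]]> *)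
definition coad_rho :: "('v \<Rightarrow> 'v \<Rightarrow> 'v) \<Rightarrow> 'v \<Rightarrow> ('v \<Rightarrow> 'k::field) \<Rightarrow> ('v \<Rightarrow> 'k)" where
  "coad_rho br x \<alpha> = (\<lambda>z. - \<alpha> (br x z))"

definition coad_mu :: "('v \<Rightarrow> 'v \<Rightarrow> 'v \<Rightarrow> 'v) \<Rightarrow> 'v \<Rightarrow> 'v \<Rightarrow> ('v \<Rightarrow> 'k::field) \<Rightarrow> ('v \<Rightarrow> 'k)" where
  "coad_mu tr x y \<alpha> = (\<lambda>z. \<alpha> (tr z y x))"

end

theory Submission
  imports Defs
begin

lemma vs_field: "vector_space ((*) :: 'k::field \<Rightarrow> 'k \<Rightarrow> 'k)"
  by unfold_locales (auto simp: algebra_simps)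

lemma dual_iff:
  assumes "vector_space s"
  shows "f \<in> dual s \<longleftrightarrow> (\<forall>x y. f (x + y) = f x + f y) \<and> (\<forall>c x. f (s c x) = c * f x)"
  using assms vs_field unfolding dual_def linear_iff by auto

lemma add_neg:
  fixes f :: "'a::ab_group_add \<Rightarrow> 'b::ab_group_add"
  assumes "\<forall>x y. f (x + y) = f x + f y"
  shows "f (- a) = - f a" "f (a - b) = f a - f b" "f 0 = 0"
proof -
  have z: "f 0 = 0" using assms[rule_format, of 0 0] by simp
  show "f 0 = 0" by (rule z)
  have "f a + f (- a) = 0" using assms[rule_format, of a "-a"] z by simp
  then show n: "f (- a) = - f a" by (simp add: add_eq_0_iff)
  have "f (- b) = - f b" using assms[rule_format, of b "-b"] z by (simp add: add_eq_0_iff)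
  then show "f (a - b) = f a - f b" using assms[rule_format, of a "-b"] by simp
qed

lemma minus_fun_apply': "(f - g) x = (f x - (g x :: 'b::ab_group_add))"
  by simp

lemma auxB: fixes a X Y W Tt Ty B1 B2 B3 :: "'a::ab_group_add"
  assumes "B1 + B2 + B3 + a + Ty + Tt = 0"
  shows "(a - X + Y - - W = 0) \<longleftrightarrow> (W = Tt - - Ty + (B3 - - B2) + B1 + X - Y)"
proof -
  have "a = - (B1 + B2 + B3 + Ty + Tt)" using assms by (simp add: eq_neg_iff_add_eq_0 algebra_simps)
  then have "a - X + Y - - W = W - (Tt - - Ty + (B3 - - B2) + B1 + X - Y)" by (simp add: algebra_simps)
  then show ?thesis by (metis eq_iff_diff_eq_0)
qed
lemma auxA: fixes P Q G :: "'a::ab_group_add"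
  shows "(P + - Q + - G = 0) \<longleftrightarrow> (G = P - Q)"
proof -
  have "P + - Q + - G = - (G - (P - Q))" by (simp add: algebra_simps)
  then show ?thesis by (metis eq_iff_diff_eq_0 neg_equal_0_iff_equal)
qed

theorem theorem4p3:
  fixes s :: "'k::field_char_0 \<Rightarrow> 'v::ab_group_add \<Rightarrow> 'v"
    and br :: "'v \<Rightarrow> 'v \<Rightarrow> 'v" and tr :: "'v \<Rightarrow> 'v \<Rightarrow> 'v \<Rightarrow> 'v"
    and T :: "('v \<Rightarrow> 'k) \<Rightarrow> 'v"
  assumes LY: "LieYamaguti s br tr"
    and T_lin: "\<forall>c. \<forall>\<alpha>\<in>dual s. \<forall>\<beta>\<in>dual s. T (dscale c \<alpha> + \<beta>) = s c (T \<alpha>) + T \<beta>"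
    and T_bij: "bij_betw T (dual s) UNIV"
    and T_skew: "\<forall>\<alpha>\<in>dual s. \<forall>\<beta>\<in>dual s. \<alpha> (T \<beta>) + \<beta> (T \<alpha>) = 0"
  shows "symplectic s br tr (\<lambda>x y. inv_into (dual s) T x y)
     \<longleftrightarrow> relRB s br tr (dual s) dscale (coad_rho br) (coad_mu tr) T"
proof -
  note LYc = LY[unfolded LieYamaguti_def]
  have VS: "vector_space s" and bil: "bilin s s br" and tri: "trilin s tr"
    using LYc by blast+
  have brskew: "\<And>x y. br x y = - br y x" using LYc by (elim conjE allE) assumption
  have trskew: "\<And>x y z. tr x y z = - tr y x z" using LYc by (elim conjE allE) assumption
  have LY1: "\<And>x y z. br (br x y) z + br (br y z) x + br (br z x) y + tr x y z + tr y z x + tr z x y = 0"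
    using LYc by (elim conjE allE) assumption
  have brL: "\<And>x a b. br x (a + b) = br x a + br x b" "\<And>x c a. br x (s c a) = s c (br x a)"
    and brR: "\<And>x a b. br (a + b) x = br a x + br b x" "\<And>x c a. br (s c a) x = s c (br a x)"
    using bil unfolding bilin_def linear_iff by blast+
  have trL: "\<And>x y a b. tr (a + b) x y = tr a x y + tr b x y" "\<And>x y c a. tr (s c a) x y = s c (tr a x y)"
    using tri unfolding trilin_def linear_iff by blast+
  have brRn: "\<And>x a. br (- a) x = - br a x" using add_neg(1)[of "\<lambda>a. br a x" for x] brR(1) by blast
  have brLn: "\<And>x a. br x (- a) = - br x a" using add_neg(1)[of "br x" for x] brL(1) by blast
  define S where "S = inv_into (dual s) T"
  have Sd: "\<And>x. S x \<in> dual s" unfolding S_def using T_bij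
    by (metis bij_betw_def inv_into_into iso_tuple_UNIV_I)
  have TS: "\<And>x. T (S x) = x" unfolding S_def using T_bij
    by (metis bij_betw_imp_surj_on f_inv_into_f UNIV_I)
  have ST: "\<And>a. a \<in> dual s \<Longrightarrow> S (T a) = a" unfolding S_def using T_bij
    by (meson bij_betw_inv_into_left)
  have Sadd: "\<And>x a b. S x (a + b) = S x a + S x b" and Ssc: "\<And>x c a. S x (s c a) = c * S x a"
    using Sd dual_iff[OF VS] by blast+
  have Sneg: "S x (- a) = - S x a" for x a using add_neg(1)[of "S x" a] Sadd by blast
  have Sz0: "S x 0 = 0" for x using add_neg(3)[of "S x"] Sadd by blast
  have Sskew: "\<And>a b. S a b = - S b a"
    using T_skew Sd TS by (metis add_eq_0_iff)
  have s1: "\<And>v. s 1 v = v" using VS by (simp add: vector_space_def module.scale_one)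
  have zd: "(0 :: 'v \<Rightarrow> 'k) \<in> dual s" using dual_iff[OF VS] by simp
  have T0: "T 0 = 0"
  proof -
    have "T (dscale 1 0 + 0) = s 1 (T 0) + T 0" using T_lin zd by blast
    moreover have "dscale 1 (0::'v\<Rightarrow>'k) + 0 = 0" by (simp add: dscale_def fun_eq_iff)
    ultimately have "T 0 = T 0 + T 0" by (simp only: s1)
    then show ?thesis by simp
  qed
  have S0: "S 0 = 0" using ST[OF zd] T0 by simp
  have Slin_add: "\<And>x y. S (x + y) = S x + S y"
  proof -
    fix x y
    have m: "S x + S y \<in> dual s" using Sd dual_iff[OF VS] by (simp add: Sadd Ssc algebra_simps)
    have "T (dscale 1 (S x) + S y) = s 1 (T (S x)) + T (S y)" using T_lin Sd by blast
    then have "T (S x + S y) = x + y" by (simp add: dscale_def s1 TS)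
    then show "S (x + y) = S x + S y" using ST[OF m] by simp
  qed
  have Slin_sc: "\<And>c x. S (s c x) = dscale c (S x)"
  proof -
    fix c x
    have m: "dscale c (S x) \<in> dual s" using Sd dual_iff[OF VS] by (simp add: dscale_def Sadd Ssc algebra_simps)
    have "T (dscale c (S x) + 0) = s c (T (S x)) + T 0" using T_lin Sd zd by blast
    then have "T (dscale c (S x)) = s c x" by (simp add: TS T0)
    then show "S (s c x) = dscale c (S x)" using ST[OF m] by simp
  qed
  have part1: "bilin s (*) (\<lambda>x y. S x y) \<and> (\<forall>x y. S x y = - S y x) \<and> (\<forall>x. (\<forall>y. S x y = 0) \<longrightarrow> x = 0)"
  proof (intro conjI allI impI)
    show "bilin s (*) (\<lambda>x y. S x y)"
      unfolding bilin_def using Sd VS vs_field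
      by (auto simp: dual_def linear_iff Slin_add Slin_sc dscale_def)
    show "\<And>x y. S x y = - S y x" by (rule Sskew)
    fix x assume "\<forall>y. S x y = 0"
    then have "S x = S 0" using S0 by auto
    then show "x = 0" using TS by metis
  qed
  define g where "g x y = coad_rho br x (S y) - coad_rho br y (S x)" for x y
  have gd: "\<And>x y. g x y \<in> dual s"
    unfolding g_def dual_iff[OF VS] coad_rho_def
    by (simp add: brL Sadd Ssc algebra_simps)
  have keyA: "\<And>x y t. (S x (br y t) + S y (br t x) + S t (br x y) = 0) \<longleftrightarrow> S (br x y) t = g x y t"
  proof -
    fix x y t
    have "S y (br t x) = - S y (br x t)" by (metis brskew Sneg)
    moreover have "S t (br x y) = - S (br x y) t" by (rule Sskew)
    ultimately show "?thesis x y t" unfolding g_def coad_rho_def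
      by (auto simp: algebra_simps)
  qed
  have A: "(\<forall>x y z. S x (br y z) + S y (br z x) + S z (br x y) = 0) \<longleftrightarrow>
      (\<forall>u\<in>dual s. \<forall>v\<in>dual s. br (T u) (T v) = T (coad_rho br (T u) v - coad_rho br (T v) u))"
  proof
    assume h: "\<forall>x y z. S x (br y z) + S y (br z x) + S z (br x y) = 0"
    show "\<forall>u\<in>dual s. \<forall>v\<in>dual s. br (T u) (T v) = T (coad_rho br (T u) v - coad_rho br (T v) u)"
    proof (intro ballI)
      fix u v assume u: "u \<in> dual s" and v: "v \<in> dual s"
      have "S (br (T u) (T v)) = g (T u) (T v)"
      proof (rule ext)
        fix t show "S (br (T u) (T v)) t = g (T u) (T v) t"
          using keyA[of "T u" "T v" t] h by blast
      qed
      then have "br (T u) (T v) = T (g (T u) (T v))" by (metis TS)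
      then show "br (T u) (T v) = T (coad_rho br (T u) v - coad_rho br (T v) u)"
        unfolding g_def using ST u v by simp
    qed
  next
    assume h: "\<forall>u\<in>dual s. \<forall>v\<in>dual s. br (T u) (T v) = T (coad_rho br (T u) v - coad_rho br (T v) u)"
    show "\<forall>x y z. S x (br y z) + S y (br z x) + S z (br x y) = 0"
    proof (intro allI)
      fix x y z
      have "br x y = T (g x y)" using h[rule_format, OF Sd Sd, of x y] unfolding g_def TS .
      then have "S (br x y) = g x y" by (simp add: ST[OF gd])
      then show "S x (br y z) + S y (br z x) + S z (br x y) = 0" using keyA[of x y z] by simp
    qed
  qed
  define h where "h x y z = Drm br (coad_rho br) (coad_mu tr) x y (S z) + coad_mu tr y z (S x) - coad_mu tr x z (S y)" for x y z
  have hd: "\<And>x y z. h x y z \<in> dual s"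
    unfolding h_def dual_iff[OF VS] coad_rho_def coad_mu_def Drm_def
    by (simp add: brL trL Sadd Ssc algebra_simps)
  have keyB: "\<And>x y z t. (S z (tr x y t) - S x (tr t z y) + S y (tr t z x) - S t (tr x y z) = 0)
       \<longleftrightarrow> S (tr x y z) t = h x y z t"
  proof -
    fix x y z t
    have e1: "S z (tr t y x) = - S z (tr y t x)" by (metis trskew Sneg)
    have e2: "S z (br y (br x t)) = S z (br (br t x) y)" by (metis brskew brLn brRn)
    have e3: "S z (br x (br y t)) = - S z (br (br y t) x)" by (metis brskew Sneg)
    have e4: "S z (br (br x y) t) + S z (br (br y t) x) + S z (br (br t x) y) + S z (tr x y t) + S z (tr y t x) + S z (tr t x y) = 0"
      using arg_cong[OF LY1[of x y t], of "S z"] by (simp add: Sadd Sz0)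
    have e5: "S t (tr x y z) = - S (tr x y z) t" by (rule Sskew)
    have hv: "h x y z t = S z (tr t x y) - S z (tr t y x) + (S z (br y (br x t)) - S z (br x (br y t))) + S z (br (br x y) t)
        + S x (tr t z y) - S y (tr t z x)"
      unfolding h_def Drm_def coad_rho_def coad_mu_def by simp
    show "?thesis x y z t" unfolding hv e1 e2 e3 e5 by (rule auxB[OF e4])
  qed
  have B: "(\<forall>x y z w. S z (tr x y w) - S x (tr w z y) + S y (tr w z x) - S w (tr x y z) = 0) \<longleftrightarrow>
      (\<forall>u\<in>dual s. \<forall>v\<in>dual s. \<forall>w\<in>dual s. tr (T u) (T v) (T w)
          = T (Drm br (coad_rho br) (coad_mu tr) (T u) (T v) w + coad_mu tr (T v) (T w) u - coad_mu tr (T u) (T w) v))"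
  proof
    assume hh: "\<forall>x y z w. S z (tr x y w) - S x (tr w z y) + S y (tr w z x) - S w (tr x y z) = 0"
    show "\<forall>u\<in>dual s. \<forall>v\<in>dual s. \<forall>w\<in>dual s. tr (T u) (T v) (T w)
          = T (Drm br (coad_rho br) (coad_mu tr) (T u) (T v) w + coad_mu tr (T v) (T w) u - coad_mu tr (T u) (T w) v)"
    proof (intro ballI)
      fix u v w assume u: "u \<in> dual s" and v: "v \<in> dual s" and w: "w \<in> dual s"
      have "S (tr (T u) (T v) (T w)) = h (T u) (T v) (T w)"
      proof (rule ext)
        fix t show "S (tr (T u) (T v) (T w)) t = h (T u) (T v) (T w) t"
          using keyB[where x="T u" and y="T v" and z="T w" and t=t] hh by blast
      qed
      then have "tr (T u) (T v) (T w) = T (h (T u) (T v) (T w))" by (metis TS)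
      then show "tr (T u) (T v) (T w)
          = T (Drm br (coad_rho br) (coad_mu tr) (T u) (T v) w + coad_mu tr (T v) (T w) u - coad_mu tr (T u) (T w) v)"
        unfolding h_def using ST u v w by simp
    qed
  next
    assume hh: "\<forall>u\<in>dual s. \<forall>v\<in>dual s. \<forall>w\<in>dual s. tr (T u) (T v) (T w)
          = T (Drm br (coad_rho br) (coad_mu tr) (T u) (T v) w + coad_mu tr (T v) (T w) u - coad_mu tr (T u) (T w) v)"
    show "\<forall>x y z w. S z (tr x y w) - S x (tr w z y) + S y (tr w z x) - S w (tr x y z) = 0"
    proof (intro allI)
      fix x y z t
      have "tr x y z = T (h x y z)" using hh[rule_format, OF Sd Sd Sd, of x y z] unfolding h_def TS .
      then have "S (tr x y z) = h x y z" by (simp add: ST[OF hd])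
      then show "S z (tr x y t) - S x (tr t z y) + S y (tr t z x) - S t (tr x y z) = 0" using keyB[where x=x and y=y and z=z and t=t] by simp
    qed
  qed
  have RB1: "\<forall>c. \<forall>u\<in>dual s. \<forall>v\<in>dual s. T (dscale c u + v) = s c (T u) + T v" by (rule T_lin)
  show ?thesis
    unfolding symplectic_def relRB_def S_def[symmetric]
    using part1 A B RB1 by blast
qed

end
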